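(* Let $n$ be even, let $1\le m\le n/2$, and let $F,F'\colon\mathbb F_2^n\to\mathbb F_2^m$ be two $(n,m)$-bent functions. Then $F$ and $F'$ are extended-affine equivalent if and only if their addition designs $\mathbb D(F)$ and $\mathbb D(F')$ are isomorphic.
   Context: An $(n,m)$-function is a map $F\colon\mathbb F_2^n\to\mathbb F_2^m$. For $\mathbf b\in\mathbb F_2^m$ the component function is $F_{\mathbf b}(\mathbf x)=\langle \mathbf b,F(\mathbf x)\rangle_m$ (standard dot product), and the Walsh transform is $W_F(\mathbf a,\mathbf b)=\sum_{\mathbf x\in\mathbb F_2^n}(-1)^{F_{\mathbf b}(\mathbf x)\oplus\langle\mathbf a,\mathbf x\rangle_n}$. $F$ is bent if $W_F(\mathbf a,\mathbf b)=\pm 2^{n/2}$ for all $\mathbf a\in\mathbb F_2^n$ and all $\mathbf b\in\mathbb F_2^m\setminus\{\mathbf 0\}$. Two $(n,m)$-functions $F,F'$ are extended-affine (EA-) equivalent if $F=A_1\circ F'\circ A_2\oplus A_3$ for a linear permutation $A_1$ of $\mathbb F_2^m$, an affine permutation $A_2$ of $\mathbb F_2^n$ and an affine map $A_3\colon\mathbb F_2^n\to\mathbb F_2^m$. For an $(n,m)$-bent $F$, let $\mathcal C(F)\subseteq\mathbb F_2^{2^n}$ be the binary linear code spanned by the rows of the $(n+m+1)\times 2^n$ matrix whose column indexed by $\mathbf x\in\mathbb F_2^n$ is $(1,\mathbf x,F(\mathbf x))^T$ (coordinates indexed by $\mathbb F_2^n$). The addition design $\mathbb D(F)$ is the incidence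 structure with point set $\mathbb F_2^n$ and block set $\{\operatorname{supp}(c): c\in\mathcal C(F),\ \operatorname{wt}(c)=2^{n-1}-2^{n/2-1}\}$. Two incidence structures are isomorphic if there exist permutation matrices $P,Q$ with $M=P M' Q$ for their incidence matrices $M,M'$ (equivalently, a bijection of points inducing a bijection of blocks). *)

theory Defs
  imports Main
begin

text \<open>Vectors of F_2^n are bool lists of length n (True = 1).\<close>

definition vecs :: "nat \<Rightarrow> bool list set" where
  "vecs n = {x. length x = n}"

definition vzero :: "nat \<Rightarrow> bool list" where
  "vzero n = replicate n False"

definition vadd :: "bool list \<Rightarrow> bool list \<Rightarrow> bool list" where
  "vadd x y = map2 (\<noteq>) x y"

definition dotp :: "bool list \<Rightarrow> bool list \<Rightarrow> bool" where
  "dotp a x = odd (card {i. i < length a \<and> a ! i \<and> x ! i})"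

definition is_nm_function :: "nat \<Rightarrow> nat \<Rightarrow> (bool list \<Rightarrow> bool list) \<Rightarrow> bool" where
  "is_nm_function n m F \<longleftrightarrow> (\<forall>x\<in>vecs n. F x \<in> vecs m)"

definition walsh :: "nat \<Rightarrow> (bool list \<Rightarrow> bool list) \<Rightarrow> bool list \<Rightarrow> bool list \<Rightarrow> int" where
  "walsh n F a b = (\<Sum>x\<in>vecs n. (-1) ^ (if dotp b (F x) \<noteq> dotp a x then 1 else 0))"

definition vbent :: "nat \<Rightarrow> nat \<Rightarrow> (bool list \<Rightarrow> bool list) \<Rightarrow> bool" where
  "vbent n m F \<longleftrightarrow> is_nm_function n m F \<and>
     (\<forall>a\<in>vecs n. \<forall>b\<in>vecs m - {vzero m}. \<bar>walsh n F a b\<bar> = 2 ^ (n div 2))"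

text \<open>Linear maps F_2^n \<rightarrow> F_2^m (additivity suffices over F_2).\<close>
definition linear_map :: "nat \<Rightarrow> nat \<Rightarrow> (bool list \<Rightarrow> bool list) \<Rightarrow> bool" where
  "linear_map n m L \<longleftrightarrow> (\<forall>x\<in>vecs n. L x \<in> vecs m) \<and>
     (\<forall>x\<in>vecs n. \<forall>y\<in>vecs n. L (vadd x y) = vadd (L x) (L y))"

definition affine_map :: "nat \<Rightarrow> nat \<Rightarrow> (bool list \<Rightarrow> bool list) \<Rightarrow> bool" where
  "affine_map n m A \<longleftrightarrow> (\<exists>L c. linear_map n m L \<and> c \<in> vecs m \<and>
     (\<forall>x\<in>vecs n. A x = vadd (L x) c))"

definition EA_equivalent :: "nat \<Rightarrow> nat \<Rightarrow> (bool list \<Rightarrow> bool list) \<Rightarrow> (bool list \<Rightarrow> bool list) \<Rightarrow> bool" where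
  "EA_equivalent n m F F' \<longleftrightarrow> (\<exists>A1 A2 A3.
     linear_map m m A1 \<and> bij_betw A1 (vecs m) (vecs m) \<and>
     affine_map n n A2 \<and> bij_betw A2 (vecs n) (vecs n) \<and>
     affine_map n m A3 \<and>
     (\<forall>x\<in>vecs n. F x = vadd (A1 (F' (A2 x))) (A3 x)))"

text \<open>The code C(F): the row space of the matrix with columns (1,x,F(x)).
  A linear combination of the rows with coefficients (c,a,b) is the word
  x \<mapsto> c + <a,x> + <b,F(x)>; codewords are represented as their support sets.\<close>
definition code_supports :: "nat \<Rightarrow> nat \<Rightarrow> (bool list \<Rightarrow> bool list) \<Rightarrow> bool list set set" where
  "code_supports n m F = {{x\<in>vecs n. c \<noteq> (dotp a x \<noteq> dotp b (F x))} | c a b.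
      a \<in> vecs n \<and> b \<in> vecs m}"

definition add_design_blocks :: "nat \<Rightarrow> nat \<Rightarrow> (bool list \<Rightarrow> bool list) \<Rightarrow> bool list set set" where
  "add_design_blocks n m F = {B\<in>code_supports n m F. card B = 2^(n-1) - 2^(n div 2 - 1)}"

definition incidence_iso :: "'a set \<Rightarrow> 'a set set \<Rightarrow> 'b set \<Rightarrow> 'b set set \<Rightarrow> bool" where
  "incidence_iso P B P' B' \<longleftrightarrow> (\<exists>\<sigma>. bij_betw \<sigma> P P' \<and> bij_betw (\<lambda>X. \<sigma> ` X) B B')"

end

theory Submission
  imports Defs
begin

lemma vecs_card: "card (vecs n) = 2 ^ n"
proof -
  have "vecs n = {xs. set xs \<subseteq> (UNIV::bool set) \<and> length xs = n}" by (auto simp: vecs_def)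
  thus ?thesis using card_lists_length_eq[of "UNIV::bool set" n] by simp
qed

lemma vecs_finite: "finite (vecs n)"
proof -
  have "vecs n = {xs. set xs \<subseteq> (UNIV::bool set) \<and> length xs = n}" by (auto simp: vecs_def)
  thus ?thesis using finite_lists_length_eq[of "UNIV::bool set" n] by simp
qed

lemma dotp_Nil[simp]: "dotp [] x = False"
  by (simp add: dotp_def)

lemma dotp_Cons[simp]: "dotp (a#as) (y#ys) = ((a \<and> y) \<noteq> dotp as ys)"
proof -
  let ?S = "{i. i < length as \<and> as!i \<and> ys!i}"
  have eq: "{i. i < length (a#as) \<and> (a#as)!i \<and> (y#ys)!i} = (if a \<and> y then {0} else {}) \<union> Suc ` ?S"
  proof (rule set_eqI)
    fix i show "i \<in> {i. i < length (a#as) \<and> (a#as)!i \<and> (y#ys)!i} \<longleftrightarrow> i \<in> (if a \<and> y then {0} else {}) \<union> Suc ` ?S"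
      by (cases i) auto
  qed
  have fin: "finite ?S" by simp
  have "card (Suc ` ?S) = card ?S" by (simp add: card_image)
  moreover have "0 \<notin> Suc ` ?S" by auto
  ultimately show ?thesis unfolding dotp_def eq using fin by (auto simp: card_insert_if)
qed

lemma vecs_iff[simp]: "x \<in> vecs n \<longleftrightarrow> length x = n" by (simp add: vecs_def)

lemma vadd_Cons[simp]: "vadd (a#as) (b#bs) = (a \<noteq> b) # vadd as bs" by (simp add: vadd_def)
lemma vadd_Nil[simp]: "vadd [] y = []" "vadd x [] = []" by (auto simp: vadd_def)
lemma vadd_len[simp]: "length (vadd x y) = min (length x) (length y)" by (simp add: vadd_def)
lemma vzero_len[simp]: "length (vzero n) = n" by (simp add: vzero_def)
lemma vzero_0[simp]: "vzero 0 = []" by (simp add: vzero_def)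
lemma vzero_Suc: "vzero (Suc n) = False # vzero n" by (simp add: vzero_def)

lemma vadd_comm: "vadd x y = vadd y x"
  unfolding vadd_def by (induction x arbitrary: y) (auto simp: zip_Cons1 split: list.splits)

lemma vadd_assoc: "length x = length y \<Longrightarrow> length y = length z \<Longrightarrow> vadd (vadd x y) z = vadd x (vadd y z)"
  by (induction x y z rule: list_induct3) auto

lemma vadd_self[simp]: "vadd x x = vzero (length x)"
  by (induction x) (auto simp: vzero_Suc vzero_def)

lemma vadd_zero[simp]: "length x = n \<Longrightarrow> vadd x (vzero n) = x"
  by (induction x arbitrary: n) (auto simp: vzero_Suc)

lemma vadd_zero2[simp]: "length x = n \<Longrightarrow> vadd (vzero n) x = x"
  using vadd_zero vadd_comm by metis

lemma vadd_cancel: "length x = length y \<Longrightarrow> vadd (vadd x y) y = x"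
  by (simp add: vadd_assoc)

lemma vadd_eq_zero: "length x = length y \<Longrightarrow> vadd x y = vzero (length x) \<Longrightarrow> x = y"
  by (induction x y rule: list_induct2) (auto simp: vzero_Suc)

lemma dotp_vzero_left[simp]: "dotp (vzero n) x = False"
proof -
  have "{i. i < n \<and> vzero n ! i \<and> x ! i} = {}" by (auto simp: vzero_def)
  thus ?thesis unfolding dotp_def vzero_len by (simp only: card.empty) simp
qed

lemma dotp_vzero_right[simp]: "length a = n \<Longrightarrow> dotp a (vzero n) = False"
  by (induction a arbitrary: n) (auto simp: vzero_Suc)

lemma dotp_add_left: "length a = length a' \<Longrightarrow> length a' = length x \<Longrightarrow>
   dotp (vadd a a') x = (dotp a x \<noteq> dotp a' x)"
  by (induction a a' x rule: list_induct3) auto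

lemma dotp_add_right: "length a = length x \<Longrightarrow> length x = length y \<Longrightarrow>
   dotp a (vadd x y) = (dotp a x \<noteq> dotp a y)"
  by (induction a x y rule: list_induct3) auto

lemma dotp_sym: "length a = length x \<Longrightarrow> dotp a x = dotp x a"
  by (induction a x rule: list_induct2) auto

definition unitv :: "nat \<Rightarrow> nat \<Rightarrow> bool list" where "unitv n i = (vzero n)[i := True]"

lemma unitv_len[simp]: "length (unitv n i) = n" by (simp add: unitv_def)

lemma dotp_unitv: "i < n \<Longrightarrow> dotp (unitv n i) x = x ! i"
proof -
  assume i: "i < n"
  have "{j. j < length (unitv n i) \<and> unitv n i ! j \<and> x ! j} = (if x!i then {i} else {})"
    using i by (auto simp: unitv_def vzero_def nth_list_update)
  thus ?thesis by (simp add: dotp_def)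
qed

lemma vec_ext: "length u = n \<Longrightarrow> length v = n \<Longrightarrow> (\<And>b. length b = n \<Longrightarrow> dotp b u = dotp b v) \<Longrightarrow> u = v"
proof (rule nth_equalityI)
  assume "length u = n" "length v = n" and h: "\<And>b. length b = n \<Longrightarrow> dotp b u = dotp b v"
  then show "length u = length v" by simp
  fix i assume "i < length u"
  then show "u ! i = v ! i" using h[of "unitv n i"] dotp_unitv[of i n] \<open>length u = n\<close> by simp
qed

lemma rep_lemma:
  assumes "\<And>x y. length x = n \<Longrightarrow> length y = n \<Longrightarrow> l (vadd x y) = (l x \<noteq> l y)"
  shows "\<exists>\<alpha>. length \<alpha> = n \<and> (\<forall>x. length x = n \<longrightarrow> l x = dotp \<alpha> x)"
  using assms
proof (induction n arbitrary: l)
  case 0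
  have "l [] = False" using 0[of "[]" "[]"] by simp
  thus ?case by (intro exI[of _ "[]"]) auto
next
  case (Suc n)
  have l0: "l (vzero (Suc n)) = False" using Suc.prems[of "vzero (Suc n)" "vzero (Suc n)"] by simp
  have "\<exists>\<alpha>. length \<alpha> = n \<and> (\<forall>x. length x = n \<longrightarrow> l (False # x) = dotp \<alpha> x)"
  proof (rule Suc.IH)
    fix x y :: "bool list" assume "length x = n" "length y = n"
    thus "l (False # vadd x y) = (l (False # x) \<noteq> l (False # y))"
      using Suc.prems[of "False # x" "False # y"] by simp
  qed
  then obtain \<alpha> where a: "length \<alpha> = n" "\<And>x. length x = n \<Longrightarrow> l (False # x) = dotp \<alpha> x" by blast
  show ?case
  proof (intro exI[of _ "l (True # vzero n) # \<alpha>"] conjI allI impI)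
    show "length (l (True # vzero n) # \<alpha>) = Suc n" using a by simp
    fix x :: "bool list" assume x: "length x = Suc n"
    then obtain h t where ht: "x = h # t" "length t = n" by (cases x) auto
    have "x = vadd (h # vzero n) (False # t)" using ht by simp
    hence "l x = (l (h # vzero n) \<noteq> l (False # t))" using Suc.prems[of "h # vzero n" "False # t"] ht by simp
    moreover have "l (h # vzero n) = (h \<and> l (True # vzero n))" using l0 by (cases h) (auto simp: vzero_Suc)
    ultimately show "l x = dotp (l (True # vzero n) # \<alpha>) x" using ht a by auto
  qed
qed

definition aff :: "nat \<Rightarrow> (bool list \<Rightarrow> bool) \<Rightarrow> bool" where
  "aff n g \<longleftrightarrow> (\<exists>\<alpha> \<gamma>. length \<alpha> = n \<and> (\<forall>x. length x = n \<longrightarrow> g x = (dotp \<alpha> x \<noteq> \<gamma>)))"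

lemma aff_additive:
  assumes "aff n g" "length x = n" "length y = n"
  shows "g (vadd x y) = (g x \<noteq> (g y \<noteq> g (vzero n)))"
  using assms unfolding aff_def by (auto simp: dotp_add_right)

lemma aff_from_additive:
  assumes "\<And>x y. length x = n \<Longrightarrow> length y = n \<Longrightarrow> g (vadd x y) = (g x \<noteq> (g y \<noteq> g (vzero n)))"
  shows "aff n g"
proof -
  have "\<exists>\<alpha>. length \<alpha> = n \<and> (\<forall>x. length x = n \<longrightarrow> (g x \<noteq> g (vzero n)) = dotp \<alpha> x)"
    by (rule rep_lemma) (use assms in auto)
  then obtain \<alpha> where "length \<alpha> = n" "\<And>x. length x = n \<Longrightarrow> (g x \<noteq> g (vzero n)) = dotp \<alpha> x" by blast
  thus ?thesis unfolding aff_def by (intro exI[of _ \<alpha>] exI[of _ "g (vzero n)"]) auto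
qed

lemma aff_const: "aff n (\<lambda>x. c)"
  unfolding aff_def by (intro exI[of _ "vzero n"] exI[of _ c]) auto

lemma aff_dotp: "length a = n \<Longrightarrow> aff n (\<lambda>x. dotp a x)"
  unfolding aff_def by (intro exI[of _ a] exI[of _ False]) auto

lemma aff_xor: "aff n g \<Longrightarrow> aff n h \<Longrightarrow> aff n (\<lambda>x. g x \<noteq> h x)"
  by (rule aff_from_additive) (auto simp: aff_additive)

lemma aff_cong: "aff n g \<Longrightarrow> (\<And>x. length x = n \<Longrightarrow> g x = h x) \<Longrightarrow> aff n h"
  unfolding aff_def by metis

definition aaff :: "nat \<Rightarrow> (bool list \<Rightarrow> bool list) \<Rightarrow> bool" where
  "aaff n s \<longleftrightarrow> (\<forall>x. length x = n \<longrightarrow> length (s x) = n) \<and>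
     (\<forall>x y. length x = n \<longrightarrow> length y = n \<longrightarrow> s (vadd x y) = vadd (vadd (s x) (s y)) (s (vzero n)))"

lemma aff_comp:
  assumes g: "aff n g" and s: "aaff n s"
  shows "aff n (\<lambda>x. g (s x))"
proof (rule aff_from_additive)
  fix x y :: "bool list" assume xy: "length x = n" "length y = n"
  have l: "length (s x) = n" "length (s y) = n" "length (s (vzero n)) = n"
    using s xy unfolding aaff_def by auto
  have "g (s (vadd x y)) = g (vadd (vadd (s x) (s y)) (s (vzero n)))" using s xy unfolding aaff_def by auto
  also have "\<dots> = (g (vadd (s x) (s y)) \<noteq> (g (s (vzero n)) \<noteq> g (vzero n)))"
    using aff_additive[OF g, of "vadd (s x) (s y)" "s (vzero n)"] l by simp
  also have "\<dots> = (g (s x) \<noteq> (g (s y) \<noteq> g (s (vzero n))))"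
    using aff_additive[OF g, of "s x" "s y"] l by auto
  finally show "g (s (vadd x y)) = (g (s x) \<noteq> (g (s y) \<noteq> g (s (vzero n))))" .
qed

lemma nonzero_has_true:
  assumes "length a = n" "a \<noteq> vzero n" shows "\<exists>i<n. a ! i"
proof (rule ccontr)
  assume "\<not> (\<exists>i<n. a ! i)"
  hence "a = vzero n" using assms by (intro nth_equalityI) (auto simp: vzero_def)
  thus False using assms by simp
qed

lemma vecs_split_card:
  assumes "finite A" shows "card (A \<inter> {x. P x}) + card (A \<inter> {x. \<not> P x}) = card A"
proof -
  have "A = (A \<inter> {x. P x}) \<union> (A \<inter> {x. \<not> P x})" by auto
  moreover have "(A \<inter> {x. P x}) \<inter> (A \<inter> {x. \<not> P x}) = {}" by auto
  ultimately show ?thesis using assms card_Un_disjoint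
    by (metis (no_types, lifting) finite_Int)
qed

lemma hyp_card:
  assumes a: "length a = n" "a \<noteq> vzero n"
  shows "card {x\<in>vecs n. dotp a x = e} = 2 ^ (n - 1)"
proof -
  obtain i where i: "i < n" "a ! i" using nonzero_has_true[OF a] by blast
  define f where "f x = vadd x (unitv n i)" for x
  have dai: "dotp a (unitv n i) = True" using dotp_sym[of a "unitv n i"] a dotp_unitv[OF i(1)] i by simp
  have df: "length x = n \<Longrightarrow> dotp a (f x) = (\<not> dotp a x)" for x
    unfolding f_def using dotp_add_right[of a x "unitv n i"] a dai by simp
  have ff: "length x = n \<Longrightarrow> f (f x) = x" for x unfolding f_def by (simp add: vadd_cancel)
  have lf: "length x = n \<Longrightarrow> length (f x) = n" for x unfolding f_def by simp
  let ?T = "{x\<in>vecs n. dotp a x}" and ?U = "{x\<in>vecs n. \<not> dotp a x}"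
  have "bij_betw f ?T ?U"
    by (rule bij_betw_byWitness[of _ f]) (auto simp: ff lf df)
  hence eq: "card ?T = card ?U" by (rule bij_betw_same_card)
  have "card (vecs n \<inter> {x. dotp a x}) + card (vecs n \<inter> {x. \<not> dotp a x}) = card (vecs n)"
    using vecs_split_card[OF vecs_finite] .
  moreover have "vecs n \<inter> {x. dotp a x} = ?T" "vecs n \<inter> {x. \<not> dotp a x} = ?U" by auto
  ultimately have "card ?T + card ?U = 2 ^ n" by (simp add: vecs_card)
  moreover have "(2::nat) ^ n = 2 * 2 ^ (n - 1)" using i by (cases n) auto
  ultimately have "card ?T = 2 ^ (n - 1)" "card ?U = 2 ^ (n - 1)" using eq by auto
  thus ?thesis by (cases e) auto
qed

definition supp :: "nat \<Rightarrow> (bool list \<Rightarrow> bool list) \<Rightarrow> bool \<Rightarrow> bool list \<Rightarrow> bool list \<Rightarrow> bool list set" where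
  "supp n F c a b = {x\<in>vecs n. c \<noteq> (dotp a x \<noteq> dotp b (F x))}"

lemma code_supports_alt: "code_supports n m F = {supp n F c a b | c a b. a \<in> vecs n \<and> b \<in> vecs m}"
  unfolding code_supports_def supp_def by simp

lemma walsh_card:
  "walsh n F a b = 2 ^ n - 2 * int (card (supp n F False a b))"
proof -
  let ?P = "\<lambda>x. dotp b (F x) \<noteq> dotp a x"
  have "walsh n F a b = (\<Sum>x\<in>vecs n. if ?P x then -1 else (1::int))"
    unfolding walsh_def by (rule sum.cong) auto
  also have "\<dots> = (\<Sum>x\<in>vecs n \<inter> {x. ?P x}. -1) + (\<Sum>x\<in>vecs n \<inter> - {x. ?P x}. 1)"
    by (rule sum.If_cases[OF vecs_finite])
  also have "\<dots> = - int (card (vecs n \<inter> {x. ?P x})) + int (card (vecs n \<inter> {x. \<not> ?P x}))"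
    by (simp add: Compl_eq)
  also have "vecs n \<inter> {x. ?P x} = supp n F False a b" unfolding supp_def by auto
  finally have w: "walsh n F a b = - int (card (supp n F False a b)) + int (card (vecs n \<inter> {x. \<not> ?P x}))" .
  have "card (vecs n \<inter> {x. ?P x}) + card (vecs n \<inter> {x. \<not> ?P x}) = 2 ^ n"
    using vecs_split_card[OF vecs_finite, of n ?P] by (simp only: vecs_card)
  moreover have "vecs n \<inter> {x. ?P x} = supp n F False a b" unfolding supp_def by auto
  ultimately have "int (card (supp n F False a b) + card (vecs n \<inter> {x. \<not> ?P x})) = int (2 ^ n)" by simp
  hence "int (card (supp n F False a b)) + int (card (vecs n \<inter> {x. \<not> ?P x})) = 2 ^ n"
    by (simp only: of_nat_add of_nat_power of_nat_numeral)
  then show ?thesis using w by linarith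
qed

lemma supp_compl_card: "card (supp n F False a b) + card (supp n F True a b) = 2 ^ n"
proof -
  have "card (vecs n \<inter> {x. dotp a x \<noteq> dotp b (F x)}) + card (vecs n \<inter> {x. \<not> (dotp a x \<noteq> dotp b (F x))}) = card (vecs n)"
    by (rule vecs_split_card[OF vecs_finite])
  moreover have "vecs n \<inter> {x. dotp a x \<noteq> dotp b (F x)} = supp n F False a b"
    "vecs n \<inter> {x. \<not> (dotp a x \<noteq> dotp b (F x))} = supp n F True a b" unfolding supp_def by auto
  ultimately show ?thesis by (simp add: vecs_card)
qed

lemma pow_facts:
  assumes "n = 2 * Suc j"
  shows "(2::nat) ^ n = 4 * 2^j * 2^j" "(2::nat) ^ (n - 1) = 2 * 2^j * 2^j" "(2::nat) ^ (n div 2 - 1) = 2 ^ j"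
    "(2::nat) ^ (n div 2) = 2 * 2 ^ j"
proof -
  have "(2::nat) ^ n = 2 ^ (2 + j + j)" using assms by (simp add: algebra_simps)
  thus "(2::nat) ^ n = 4 * 2^j * 2^j" by (simp add: power_add)
  have "(2::nat) ^ (n - 1) = 2 ^ (1 + j + j)" using assms by (simp add: algebra_simps)
  thus "(2::nat) ^ (n - 1) = 2 * 2^j * 2^j" by (simp add: power_add)
  show "(2::nat) ^ (n div 2 - 1) = 2 ^ j" using assms by simp
  show "(2::nat) ^ (n div 2) = 2 * 2 ^ j" using assms by simp
qed

lemma bent_weight:
  assumes bent: "vbent n m F" and n: "n = 2 * Suc j" and a: "length a = n" and b: "length b = m" "b \<noteq> vzero m"
  shows "card (supp n F c a b) = 2^(n-1) - 2^(n div 2 - 1) \<or> card (supp n F c a b) = 2^(n-1) + 2^(n div 2 - 1)"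
    and "\<exists>c. card (supp n F c a b) = 2^(n-1) - 2^(n div 2 - 1)"
proof -
  define p :: nat where "p = 2 ^ j"
  define q :: nat where "q = p * p"
  have p1: "p \<ge> 1" unfolding p_def by simp
  have pq: "p \<le> q" unfolding q_def using p1 by simp
  note pf = pow_facts[OF n, folded p_def, simplified mult.assoc, folded q_def]
  have "\<bar>walsh n F a b\<bar> = 2 ^ (n div 2)" using bent a b unfolding vbent_def by auto
  hence w: "\<bar>walsh n F a b\<bar> = 2 * int p" using pf(4) by (metis of_nat_numeral of_nat_mult of_nat_power)
  define s where "s = card (supp n F False a b)"
  have ws: "walsh n F a b = 4 * int q - 2 * int s"
    using walsh_card[of n F a b] pf(1) unfolding s_def by (metis of_nat_numeral of_nat_mult of_nat_power)
  have sc: "s + card (supp n F True a b) = 4 * q" using supp_compl_card[of n F a b] pf(1) s_def by simp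
  have "int s = 2 * int q - int p \<or> int s = 2 * int q + int p" using w ws by linarith
  hence "s = 2 * q - p \<or> s = 2 * q + p" using pq by linarith
  then have cases: "(s = 2*q - p \<and> card (supp n F True a b) = 2*q + p) \<or> (s = 2*q + p \<and> card (supp n F True a b) = 2*q - p)"
    using sc pq by auto
  show "card (supp n F c a b) = 2^(n-1) - 2^(n div 2 - 1) \<or> card (supp n F c a b) = 2^(n-1) + 2^(n div 2 - 1)"
    using cases unfolding pf(2,3) s_def by (cases c) auto
  show "\<exists>c. card (supp n F c a b) = 2^(n-1) - 2^(n div 2 - 1)"
    using cases unfolding pf(2,3) s_def by blast
qed

lemma K_facts:
  assumes "n = 2 * Suc j"
  shows "2^(n-1) - 2^(n div 2 - 1) \<noteq> (2::nat)^(n-1)" "2^(n-1) + 2^(n div 2 - 1) \<noteq> (2::nat)^(n-1)"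
    "2^(n-1) - 2^(n div 2 - 1) \<noteq> (0::nat)" "2^(n-1) - 2^(n div 2 - 1) \<noteq> (2::nat)^n"
    "(2::nat)^(n-1) \<noteq> 0" "(2::nat)^(n-1) \<noteq> 2^n"
proof -
  define p :: nat where "p = 2 ^ j"
  define q :: nat where "q = p * p"
  have p1: "p \<ge> 1" unfolding p_def by simp
  have pq: "p \<le> q" unfolding q_def using p1 by simp
  note pf = pow_facts[OF assms, folded p_def, simplified mult.assoc, folded q_def]
  show "2^(n-1) - 2^(n div 2 - 1) \<noteq> (2::nat)^(n-1)" "2^(n-1) + 2^(n div 2 - 1) \<noteq> (2::nat)^(n-1)"
    "2^(n-1) - 2^(n div 2 - 1) \<noteq> (0::nat)" "2^(n-1) - 2^(n div 2 - 1) \<noteq> (2::nat)^n"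
    "(2::nat)^(n-1) \<noteq> 0" "(2::nat)^(n-1) \<noteq> 2^n"
    unfolding pf using p1 pq by auto
qed

lemma supp_zero_b: "supp n F c a (vzero m) = {x\<in>vecs n. dotp a x = (\<not> c)}"
  unfolding supp_def by auto

lemma supp_zero_b_card:
  assumes "length a = n" "n \<ge> 1"
  shows "card (supp n F c a (vzero m)) = 2 ^ (n - 1) \<or> (a = vzero n \<and> (card (supp n F c a (vzero m)) = 0 \<or> card (supp n F c a (vzero m)) = 2 ^ n))"
proof (cases "a = vzero n")
  case True
  hence "supp n F c a (vzero m) = (if c then vecs n else {})" unfolding supp_zero_b True by auto
  thus ?thesis using True by (simp add: vecs_card)
next
  case False
  thus ?thesis unfolding supp_zero_b using hyp_card[OF assms(1) False] by simp
qed

lemma block_form: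
  assumes n: "n = 2 * Suc j" and B: "B \<in> add_design_blocks n m F"
  shows "\<exists>c a b. B = supp n F c a b \<and> length a = n \<and> length b = m \<and> b \<noteq> vzero m"
proof -
  from B obtain c a b where Bs: "B = supp n F c a b" "length a = n" "length b = m"
    and card: "card B = 2^(n-1) - 2^(n div 2 - 1)"
    unfolding add_design_blocks_def code_supports_alt by auto
  have "b \<noteq> vzero m"
  proof
    assume "b = vzero m"
    hence "card B = 2 ^ (n - 1) \<or> (card B = 0 \<or> card B = 2 ^ n)"
      using supp_zero_b_card[of a n F c m] Bs n by auto
    thus False using card K_facts[OF n] by auto
  qed
  thus ?thesis using Bs by blast
qed

lemma block_exists:
  assumes bent: "vbent n m F" and n: "n = 2 * Suc j" and "length a = n" "length b = m" "b \<noteq> vzero m"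
  shows "\<exists>c. supp n F c a b \<in> add_design_blocks n m F"
proof -
  obtain c where "card (supp n F c a b) = 2^(n-1) - 2^(n div 2 - 1)" using bent_weight(2)[OF assms] by blast
  thus ?thesis using assms unfolding add_design_blocks_def code_supports_alt by auto
qed

lemma bent_not_aff:
  assumes bent: "vbent n m F" and n: "n = 2 * Suc j" and b: "length b = m" "b \<noteq> vzero m"
    and af: "aff n (\<lambda>y. dotp b (F y))"
  shows False
proof -
  obtain \<alpha> \<gamma> where a: "length \<alpha> = n" "\<And>x. length x = n \<Longrightarrow> dotp b (F x) = (dotp \<alpha> x \<noteq> \<gamma>)"
    using af unfolding aff_def by blast
  have "walsh n F \<alpha> b = (\<Sum>x\<in>vecs n. (-1) ^ (if \<gamma> then 1 else 0))"
    unfolding walsh_def by (rule sum.cong) (auto simp: a(2))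
  hence "\<bar>walsh n F \<alpha> b\<bar> = 2 ^ n" by (simp add: vecs_card)
  moreover have "\<bar>walsh n F \<alpha> b\<bar> = 2 ^ (n div 2)" using bent a b unfolding vbent_def by auto
  moreover have "n div 2 < n" using n by simp
  ultimately show False by (metis power_strict_increasing_iff one_less_numeral_iff semiring_norm(76) less_irrefl)
qed

definition Hyp :: "nat \<Rightarrow> bool list set set" where
  "Hyp n = {H. \<exists>d e. length d = n \<and> d \<noteq> vzero n \<and> H = {x\<in>vecs n. dotp d x = e}}"

lemma Hyp_sub: "H \<in> Hyp n \<Longrightarrow> H \<subseteq> vecs n" unfolding Hyp_def by auto

lemma Hyp_finite: "finite (Hyp n)"
proof -
  have "Hyp n \<subseteq> Pow (vecs n)" using Hyp_sub by auto
  thus ?thesis using vecs_finite finite_subset by blast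
qed

lemma Hyp_surj:
  assumes bij: "bij_betw \<sigma> (vecs n) (vecs n)" and hyp: "\<And>H. H \<in> Hyp n \<Longrightarrow> \<sigma> ` H \<in> Hyp n"
  shows "(\<lambda>H. \<sigma> ` H) ` Hyp n = Hyp n"
proof (rule endo_inj_surj[OF Hyp_finite])
  show "(\<lambda>H. \<sigma> ` H) ` Hyp n \<subseteq> Hyp n" using hyp by auto
  show "inj_on (\<lambda>H. \<sigma> ` H) (Hyp n)"
  proof (rule inj_onI)
    fix X Y assume "X \<in> Hyp n" "Y \<in> Hyp n" "\<sigma> ` X = \<sigma> ` Y"
    thus "X = Y" using inj_on_image_eq_iff[of \<sigma> "vecs n" X Y] bij Hyp_sub unfolding bij_betw_def by blast
  qed
qed


lemma geom:
  assumes bij: "bij_betw \<sigma> (vecs n) (vecs n)" and hyp: "\<And>H. H \<in> Hyp n \<Longrightarrow> \<sigma> ` H \<in> Hyp n"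
  shows "aaff n \<sigma>"
proof -
  have sur: "(\<lambda>H. \<sigma> ` H) ` Hyp n = Hyp n" by (rule Hyp_surj[OF bij hyp])
  have inj: "inj_on \<sigma> (vecs n)" using bij by (simp add: bij_betw_def)
  have len: "length x = n \<Longrightarrow> length (\<sigma> x) = n" for x using bij bij_betwE by fastforce
  have key: "\<exists>d e. length d = n \<and> (\<forall>p. length p = n \<longrightarrow> dotp d' (\<sigma> p) = (dotp d p \<noteq> e))"
    if d': "length d' = n" "d' \<noteq> vzero n" for d'
  proof -
    have "{x\<in>vecs n. dotp d' x = False} \<in> Hyp n" using d' unfolding Hyp_def mem_Collect_eq by (intro exI[of _ d'] exI[of _ False]) simp
    hence "{x\<in>vecs n. dotp d' x = False} \<in> (\<lambda>H. \<sigma> ` H) ` Hyp n" using sur by simp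
    then obtain H where H: "H \<in> Hyp n" "\<sigma> ` H = {x\<in>vecs n. dotp d' x = False}" by (rule imageE) simp
    then obtain d e where de: "length d = n" "H = {x\<in>vecs n. dotp d x = e}" unfolding Hyp_def mem_Collect_eq by (elim conjE exE) (rule that, assumption+)
    have "dotp d' (\<sigma> p) = (dotp d p \<noteq> e)" if p: "length p = n" for p
    proof -
      have "\<sigma> p \<in> \<sigma> ` H \<longleftrightarrow> p \<in> H" using inj p Hyp_sub[OF H(1)] by (auto dest: inj_onD)
      thus ?thesis using H(2) de(2) p len by auto
    qed
    thus ?thesis using de by blast
  qed
  have add: "\<sigma> (vadd x y) = vadd (vadd (\<sigma> x) (\<sigma> y)) (\<sigma> (vzero n))" if xy: "length x = n" "length y = n" for x y
  proof -
    define u where "u = vadd (vadd (\<sigma> x) (\<sigma> y)) (\<sigma> (vzero n))"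
    define w where "w = \<sigma> (vadd x y)"
    have lu: "length u = n" and lw: "length w = n" unfolding u_def w_def using len xy by auto
    have "vadd u w = vzero n"
    proof (rule vec_ext[of _ n])
      show "length (vadd u w) = n" "length (vzero n) = n" using lu lw by auto
      fix d' :: "bool list" assume d': "length d' = n"
      show "dotp d' (vadd u w) = dotp d' (vzero n)"
      proof (cases "d' = vzero n")
        case True thus ?thesis by simp
      next
        case False
        then obtain d e where de: "length d = n" "\<And>p. length p = n \<Longrightarrow> dotp d' (\<sigma> p) = (dotp d p \<noteq> e)"
          using key[OF d'] by blast
        have "dotp d' (vadd u w) = (((dotp d' (\<sigma> x) \<noteq> dotp d' (\<sigma> y)) \<noteq> dotp d' (\<sigma> (vzero n))) \<noteq> dotp d' w)"
          unfolding u_def using d' len xy lw by (simp add: dotp_add_right)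
        also have "\<dots> = False"
        proof -
          have l0: "length (vzero n) = n" "length (vadd x y) = n" using xy by auto
          have "dotp d (vadd x y) = (dotp d x \<noteq> dotp d y)" using dotp_add_right[of d x y] de(1) xy by simp
          moreover have "dotp d (vzero n) = False" using de(1) by simp
          ultimately show ?thesis unfolding w_def de(2)[OF xy(1)] de(2)[OF xy(2)] de(2)[OF l0(1)] de(2)[OF l0(2)]
            by (cases e; cases "dotp d x"; cases "dotp d y") auto
        qed
        finally show ?thesis using d' by simp
      qed
    qed
    hence "u = w" using vadd_eq_zero[of u w] lu lw by simp
    thus ?thesis unfolding u_def w_def by simp
  qed
  show ?thesis unfolding aaff_def using len add by blast
qed

lemma geom_inv:
  assumes bij: "bij_betw \<sigma> (vecs n) (vecs n)" and hyp: "\<And>H. H \<in> Hyp n \<Longrightarrow> \<sigma> ` H \<in> Hyp n"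
  shows "aaff n (inv_into (vecs n) \<sigma>)"
proof (rule geom)
  show "bij_betw (inv_into (vecs n) \<sigma>) (vecs n) (vecs n)" by (rule bij_betw_inv_into[OF bij])
  fix H assume "H \<in> Hyp n"
  hence "H \<in> (\<lambda>H. \<sigma> ` H) ` Hyp n" using Hyp_surj[OF bij hyp] by simp
  then obtain H0 where H0: "H0 \<in> Hyp n" "H = \<sigma> ` H0" by (rule imageE) simp
  have "inv_into (vecs n) \<sigma> ` H = H0" unfolding H0(2)
    by (rule inv_into_image_cancel[OF _ Hyp_sub[OF H0(1)]]) (use bij in \<open>simp add: bij_betw_def\<close>)
  thus "inv_into (vecs n) \<sigma> ` H \<in> Hyp n" using H0 by simp
qed

lemma vadd_nth[simp]: "i < length x \<Longrightarrow> i < length y \<Longrightarrow> vadd x y ! i = (x ! i \<noteq> y ! i)"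
  by (simp add: vadd_def)
lemma vzero_nth[simp]: "i < n \<Longrightarrow> vzero n ! i = False" by (simp add: vzero_def)

lemma aaff_inv:
  assumes s: "aaff n s" and bij: "bij_betw s (vecs n) (vecs n)"
  shows "aaff n (inv_into (vecs n) s)"
proof -
  let ?t = "inv_into (vecs n) s"
  have tl: "length u = n \<Longrightarrow> length (?t u) = n" for u
    using bij_betw_inv_into[OF bij] bij_betwE by fastforce
  have st: "length u = n \<Longrightarrow> s (?t u) = u" for u
    using bij f_inv_into_f[of u s "vecs n"] unfolding bij_betw_def by auto
  have ts: "length x = n \<Longrightarrow> ?t (s x) = x" for x
    using bij inv_into_f_f[of s "vecs n" x] unfolding bij_betw_def by auto
  have sl: "length x = n \<Longrightarrow> length (s x) = n" for x using s unfolding aaff_def by auto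
  have sadd: "length x = n \<Longrightarrow> length y = n \<Longrightarrow> s (vadd x y) = vadd (vadd (s x) (s y)) (s (vzero n))" for x y
    using s unfolding aaff_def by auto
  have "?t (vadd u v) = vadd (vadd (?t u) (?t v)) (?t (vzero n))" if uv: "length u = n" "length v = n" for u v
  proof -
    define x y z where "x = ?t u" and "y = ?t v" and "z = ?t (vzero n)"
    have l: "length x = n" "length y = n" "length z = n" unfolding x_def y_def z_def using tl uv by auto
    have "s (vadd (vadd x y) z) = vadd (vadd (s (vadd x y)) (s z)) (s (vzero n))" using sadd l by simp
    also have "\<dots> = vadd (vadd (vadd (vadd u v) (s (vzero n))) (vzero n)) (s (vzero n))"
      using sadd l st uv unfolding x_def y_def z_def by simp
    also have "\<dots> = vadd u v" using uv sl[of "vzero n"] by (auto intro!: nth_equalityI)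
    finally have "?t (s (vadd (vadd x y) z)) = ?t (vadd u v)" by simp
    thus ?thesis using ts l unfolding x_def y_def z_def by simp
  qed
  thus ?thesis unfolding aaff_def using tl by blast
qed

lemma linear_zero: "linear_map n m L \<Longrightarrow> L (vzero n) = vzero m"
proof -
  assume L: "linear_map n m L"
  have "L (vzero n) = L (vadd (vzero n) (vzero n))" by simp
  also have "\<dots> = vadd (L (vzero n)) (L (vzero n))" 
  proof -
    have z: "vzero n \<in> vecs n" by simp
    show ?thesis using L z unfolding linear_map_def by blast
  qed
  also have "\<dots> = vzero m"
  proof -
    have "length (L (vzero n)) = m" using L unfolding linear_map_def by simp
    thus ?thesis by simp
  qed
  finally show ?thesis .
qed

lemma aaff_of_affine: "affine_map n n A \<Longrightarrow> aaff n A"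
proof -
  assume "affine_map n n A"
  then obtain L c where L: "linear_map n n L" "length c = n" "\<And>x. length x = n \<Longrightarrow> A x = vadd (L x) c"
    unfolding affine_map_def by auto
  have Ll: "length x = n \<Longrightarrow> length (L x) = n" for x using L(1) unfolding linear_map_def by auto
  have La: "length x = n \<Longrightarrow> length y = n \<Longrightarrow> L (vadd x y) = vadd (L x) (L y)" for x y
    using L(1) unfolding linear_map_def by auto
  have L0: "L (vzero n) = vzero n" by (rule linear_zero[OF L(1)])
  show ?thesis unfolding aaff_def
  proof (intro conjI allI impI)
    fix x :: "bool list" assume "length x = n" thus "length (A x) = n" using L Ll by simp
  next
    fix x y :: "bool list" assume xy: "length x = n" "length y = n"
    have e: "A (vadd x y) = vadd (vadd (L x) (L y)) c" "A x = vadd (L x) c" "A y = vadd (L y) c"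
      "A (vzero n) = vadd (vzero n) c" using xy L(3)[of "vadd x y"] L(3) La L0 L(3)[of "vzero n"] by auto
    have l: "length (L x) = n" "length (L y) = n" using xy Ll by auto
    show "A (vadd x y) = vadd (vadd (A x) (A y)) (A (vzero n))"
      unfolding e by (rule nth_equalityI) (use l L(2) in auto)
  qed
qed

lemma affine_of_aaff: "aaff n s \<Longrightarrow> affine_map n n s"
proof -
  assume s: "aaff n s"
  have sl: "length x = n \<Longrightarrow> length (s x) = n" for x using s unfolding aaff_def by auto
  have sadd: "length x = n \<Longrightarrow> length y = n \<Longrightarrow> s (vadd x y) = vadd (vadd (s x) (s y)) (s (vzero n))" for x y
    using s unfolding aaff_def by auto
  have l0: "length (s (vzero n)) = n" using sl by simp
  define L where "L x = vadd (s x) (s (vzero n))" for x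
  have LL: "length x = n \<Longrightarrow> length (L x) = n" for x unfolding L_def using sl l0 by simp
  have La: "L (vadd x y) = vadd (L x) (L y)" if xy: "length x = n" "length y = n" for x y
  proof -
    have "L (vadd x y) = vadd (vadd (vadd (s x) (s y)) (s (vzero n))) (s (vzero n))"
      unfolding L_def using sadd xy by simp
    also have "\<dots> = vadd (L x) (L y)" unfolding L_def
      by (rule nth_equalityI) (use sl xy l0 in auto)
    finally show ?thesis .
  qed
  have Ls: "s x = vadd (L x) (s (vzero n))" if "length x = n" for x
    unfolding L_def using that sl l0 by (simp add: vadd_cancel)
  have "linear_map n n L" unfolding linear_map_def using LL La by auto
  moreover have "\<forall>x\<in>vecs n. s x = vadd (L x) (s (vzero n))" by (intro ballI Ls) simp
  moreover have "s (vzero n) \<in> vecs n" using l0 by simp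
  ultimately show ?thesis unfolding affine_map_def by blast
qed

lemma aff_dotp_affine:
  assumes A: "affine_map n m A" and b: "length b = m"
  shows "aff n (\<lambda>x. dotp b (A x))"
proof -
  obtain L c where L: "linear_map n m L" "length c = m" "\<And>x. length x = n \<Longrightarrow> A x = vadd (L x) c"
    using A unfolding affine_map_def by auto
  have Ll: "length x = n \<Longrightarrow> length (L x) = m" for x using L(1) unfolding linear_map_def by auto
  have La: "length x = n \<Longrightarrow> length y = n \<Longrightarrow> L (vadd x y) = vadd (L x) (L y)" for x y
    using L(1) unfolding linear_map_def by auto
  have L0: "L (vzero n) = vzero m" by (rule linear_zero[OF L(1)])
  show ?thesis
  proof (rule aff_from_additive)
    fix x y :: "bool list" assume xy: "length x = n" "length y = n"
    show "dotp b (A (vadd x y)) = (dotp b (A x) \<noteq> (dotp b (A y) \<noteq> dotp b (A (vzero n))))"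
      using xy b L(2) Ll La L0 by (simp add: L(3) dotp_add_right) blast
  qed
qed

lemma affine_from_components:
  assumes l: "\<And>x. length x = n \<Longrightarrow> length (A x) = m"
    and c: "\<And>b. length b = m \<Longrightarrow> aff n (\<lambda>x. dotp b (A x))"
  shows "affine_map n m A"
proof -
  define L where "L x = vadd (A x) (A (vzero n))" for x
  have l0: "length (A (vzero n)) = m" using l by simp
  have LL: "length x = n \<Longrightarrow> length (L x) = m" for x unfolding L_def using l l0 by simp
  have "L (vadd x y) = vadd (L x) (L y)" if xy: "length x = n" "length y = n" for x y
  proof (rule vec_ext[of _ m])
    show "length (L (vadd x y)) = m" "length (vadd (L x) (L y)) = m" using LL xy by auto
    fix b :: "bool list" assume b: "length b = m"
    have "dotp b (L (vadd x y)) = (dotp b (A (vadd x y)) \<noteq> dotp b (A (vzero n)))"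
      unfolding L_def using b l xy l0 by (simp add: dotp_add_right)
    also have "\<dots> = (dotp b (A x) \<noteq> dotp b (A y))" using aff_additive[OF c[OF b] xy] by argo
    also have "\<dots> = dotp b (vadd (L x) (L y))"
    proof -
      have "dotp b (vadd (L x) (L y)) = (dotp b (L x) \<noteq> dotp b (L y))" using LL xy b by (simp add: dotp_add_right)
      moreover have "dotp b (L x) = (dotp b (A x) \<noteq> dotp b (A (vzero n)))" unfolding L_def using b l xy l0 by (simp add: dotp_add_right)
      moreover have "dotp b (L y) = (dotp b (A y) \<noteq> dotp b (A (vzero n)))" unfolding L_def using b l xy l0 by (simp add: dotp_add_right)
      ultimately show ?thesis by argo
    qed
    finally show "dotp b (L (vadd x y)) = dotp b (vadd (L x) (L y))" .
  qed
  hence "linear_map n m L" unfolding linear_map_def using LL by auto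
  moreover have As: "A x = vadd (L x) (A (vzero n))" if "length x = n" for x
    unfolding L_def using l that l0 by (simp add: vadd_cancel)
  moreover have "\<forall>x\<in>vecs n. A x = vadd (L x) (A (vzero n))" by (intro ballI As) simp
  moreover have "A (vzero n) \<in> vecs m" using l0 by simp
  ultimately show ?thesis unfolding affine_map_def by blast
qed
lemma affine_len: "affine_map n m A \<Longrightarrow> length x = n \<Longrightarrow> length (A x) = m"
  unfolding affine_map_def linear_map_def by auto

lemma supp_sub: "supp n F c a b \<subseteq> vecs n" unfolding supp_def by auto

lemma supp_image:
  assumes bij: "bij_betw \<sigma> (vecs n) (vecs n)"
    and eq: "\<And>x. length x = n \<Longrightarrow> (c \<noteq> (dotp a x \<noteq> dotp b (F x))) = (c' \<noteq> (dotp a' (\<sigma> x) \<noteq> dotp b' (F' (\<sigma> x))))"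
  shows "\<sigma> ` supp n F c a b = supp n F' c' a' b'"
proof
  show "\<sigma> ` supp n F c a b \<subseteq> supp n F' c' a' b'"
    using eq bij_betwE[OF bij] unfolding supp_def by auto
  show "supp n F' c' a' b' \<subseteq> \<sigma> ` supp n F c a b"
  proof
    fix y assume y: "y \<in> supp n F' c' a' b'"
    hence yv: "y \<in> vecs n" unfolding supp_def by auto
    hence "y \<in> \<sigma> ` vecs n" using bij unfolding bij_betw_def by simp
    then obtain x where x: "x \<in> vecs n" "y = \<sigma> x" by (rule imageE) simp
    thus "y \<in> \<sigma> ` supp n F c a b" using y eq unfolding supp_def by auto
  qed
qed

lemma transp_exists:
  assumes A: "linear_map m m A1" and b: "length b = m"
  shows "\<exists>\<beta>. length \<beta> = m \<and> (\<forall>y. length y = m \<longrightarrow> dotp b (A1 y) = dotp \<beta> y)"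
proof (rule rep_lemma)
  fix x y :: "bool list" assume "length x = m" "length y = m"
  moreover have "length (A1 x) = m" "length (A1 y) = m" using A calculation unfolding linear_map_def by auto
  ultimately show "dotp b (A1 (vadd x y)) = (dotp b (A1 x) \<noteq> dotp b (A1 y))"
    using A b unfolding linear_map_def by (simp add: dotp_add_right)
qed

lemma card_supp_image:
  assumes "bij_betw \<sigma> (vecs n) (vecs n)"
  shows "card (\<sigma> ` supp n F c a b) = card (supp n F c a b)"
  by (rule card_image) (meson assms bij_betw_def inj_on_subset supp_sub)

lemma blocks_sub: "B \<in> add_design_blocks n m F \<Longrightarrow> B \<subseteq> vecs n"
  unfolding add_design_blocks_def code_supports_def by auto

lemma iso_from_supp_maps:
  assumes bij: "bij_betw \<sigma> (vecs n) (vecs n)"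
    and c1: "\<And>c a b. length a = n \<Longrightarrow> length b = m \<Longrightarrow> \<exists>c' a' b'. length a' = n \<and> length b' = m \<and> \<sigma> ` supp n F c a b = supp n F' c' a' b'"
    and c2: "\<And>c' a' b'. length a' = n \<Longrightarrow> length b' = m \<Longrightarrow> \<exists>c a b. length a = n \<and> length b = m \<and> \<sigma> ` supp n F c a b = supp n F' c' a' b'"
  shows "incidence_iso (vecs n) (add_design_blocks n m F) (vecs n) (add_design_blocks n m F')"
  unfolding incidence_iso_def
proof (intro exI[of _ \<sigma>] conjI bij)
  let ?K = "2^(n-1) - 2^(n div 2 - 1) :: nat"
  show "bij_betw (\<lambda>X. \<sigma> ` X) (add_design_blocks n m F) (add_design_blocks n m F')"
    unfolding bij_betw_def
  proof
    show "inj_on (\<lambda>X. \<sigma> ` X) (add_design_blocks n m F)"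
    proof (rule inj_onI)
      fix X Y assume "X \<in> add_design_blocks n m F" "Y \<in> add_design_blocks n m F" "\<sigma> ` X = \<sigma> ` Y"
      moreover have "inj_on \<sigma> (vecs n)" using bij unfolding bij_betw_def by simp
      ultimately show "X = Y" using inj_on_image_eq_iff[of \<sigma> "vecs n" X Y] blocks_sub by metis
    qed
    show "(\<lambda>X. \<sigma> ` X) ` add_design_blocks n m F = add_design_blocks n m F'"
    proof
      show "(\<lambda>X. \<sigma> ` X) ` add_design_blocks n m F \<subseteq> add_design_blocks n m F'"
      proof
        fix Y assume "Y \<in> (\<lambda>X. \<sigma> ` X) ` add_design_blocks n m F"
        then obtain B where B: "B \<in> add_design_blocks n m F" "Y = \<sigma> ` B" by (rule imageE)
        then obtain c a b where cab: "B = supp n F c a b" "length a = n" "length b = m" "card B = ?K"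
          unfolding add_design_blocks_def code_supports_alt by auto
        obtain c' a' b' where "length a' = n" "length b' = m" "\<sigma> ` supp n F c a b = supp n F' c' a' b'"
          using c1[OF cab(2,3)] by blast
        moreover have "card (\<sigma> ` supp n F c a b) = ?K" using card_supp_image[OF bij] cab by simp
        ultimately show "Y \<in> add_design_blocks n m F'" using B cab
          unfolding add_design_blocks_def code_supports_alt by auto
      qed
      show "add_design_blocks n m F' \<subseteq> (\<lambda>X. \<sigma> ` X) ` add_design_blocks n m F"
      proof
        fix Y assume "Y \<in> add_design_blocks n m F'"
        then obtain c' a' b' where cab: "Y = supp n F' c' a' b'" "length a' = n" "length b' = m" "card Y = ?K"
          unfolding add_design_blocks_def code_supports_alt by auto
        obtain c a b where cab2: "length a = n" "length b = m" "\<sigma> ` supp n F c a b = supp n F' c' a' b'"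
          using c2[OF cab(2,3)] by blast
        have "card (supp n F c a b) = ?K" using card_supp_image[OF bij, of F c a b] cab cab2 by simp
        hence "supp n F c a b \<in> add_design_blocks n m F" using cab2
          unfolding add_design_blocks_def code_supports_alt by auto
        thus "Y \<in> (\<lambda>X. \<sigma> ` X) ` add_design_blocks n m F" using cab cab2 by auto
      qed
    qed
  qed
qed

lemma forward:
  assumes nmF': "is_nm_function n m F'" and EA: "EA_equivalent n m F F'"
  shows "incidence_iso (vecs n) (add_design_blocks n m F) (vecs n) (add_design_blocks n m F')"
proof -
  obtain A1 A2 A3 where A1: "linear_map m m A1" "bij_betw A1 (vecs m) (vecs m)"
    and A2: "affine_map n n A2" "bij_betw A2 (vecs n) (vecs n)" and A3: "affine_map n m A3"
    and FE: "\<forall>x\<in>vecs n. F x = vadd (A1 (F' (A2 x))) (A3 x)"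
    using EA unfolding EA_equivalent_def by blast
  have A2a: "aaff n A2" by (rule aaff_of_affine[OF A2(1)])
  define A2i where "A2i = inv_into (vecs n) A2"
  have A2ia: "aaff n A2i" unfolding A2i_def by (rule aaff_inv[OF A2a A2(2)])
  have A2iA2: "length x = n \<Longrightarrow> A2i (A2 x) = x" for x
    unfolding A2i_def using A2(2) inv_into_f_f[of A2 "vecs n" x] unfolding bij_betw_def by auto
  have A2l: "length x = n \<Longrightarrow> length (A2 x) = n" for x using affine_len[OF A2(1)] .
  have A3l: "length x = n \<Longrightarrow> length (A3 x) = m" for x using affine_len[OF A3] .
  have F'l: "length y = n \<Longrightarrow> length (F' y) = m" for y using nmF' unfolding is_nm_function_def by auto
  have A1l: "length y = m \<Longrightarrow> length (A1 y) = m" for y using A1(1) unfolding linear_map_def by auto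
  define T where "T b = (SOME \<beta>. length \<beta> = m \<and> (\<forall>y. length y = m \<longrightarrow> dotp b (A1 y) = dotp \<beta> y))" for b
  have TP: "length (T b) = m \<and> (\<forall>y. length y = m \<longrightarrow> dotp b (A1 y) = dotp (T b) y)" if "length b = m" for b
    unfolding T_def by (rule someI_ex[OF transp_exists[OF A1(1) that]])
  have dec: "dotp b (F x) = (dotp (T b) (F' (A2 x)) \<noteq> dotp b (A3 x))" if b: "length b = m" and x: "length x = n" for b x
  proof -
    have "F x = vadd (A1 (F' (A2 x))) (A3 x)" using FE x by simp
    hence "dotp b (F x) = (dotp b (A1 (F' (A2 x))) \<noteq> dotp b (A3 x))"
      using b x A1l F'l A2l A3l by (simp add: dotp_add_right)
    thus ?thesis using TP[OF b] F'l A2l x by simp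
  qed
  show ?thesis
  proof (rule iso_from_supp_maps[OF A2(2)])
    fix c a b assume a: "length (a::bool list) = n" and b: "length (b::bool list) = m"
    let ?g = "\<lambda>x. c \<noteq> (dotp a x \<noteq> dotp b (A3 x))"
    have "aff n ?g" using aff_xor[OF aff_const aff_xor[OF aff_dotp[OF a] aff_dotp_affine[OF A3 b]]] .
    hence "aff n (\<lambda>y. ?g (A2i y))" using aff_comp A2ia by blast
    then obtain \<alpha> \<gamma> where ag: "length \<alpha> = n" "\<And>y. length y = n \<Longrightarrow> ?g (A2i y) = (dotp \<alpha> y \<noteq> \<gamma>)"
      unfolding aff_def by blast
    have "A2 ` supp n F c a b = supp n F' \<gamma> \<alpha> (T b)"
    proof (rule supp_image[OF A2(2)])
      fix x :: "bool list" assume x: "length x = n"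
      have "?g x = (dotp \<alpha> (A2 x) \<noteq> \<gamma>)" using ag(2)[OF A2l[OF x]] A2iA2[OF x] by simp
      thus "(c \<noteq> (dotp a x \<noteq> dotp b (F x))) = (\<gamma> \<noteq> (dotp \<alpha> (A2 x) \<noteq> dotp (T b) (F' (A2 x))))"
        using dec[OF b x] by argo
    qed
    thus "\<exists>c' a' b'. length a' = n \<and> length b' = m \<and> A2 ` supp n F c a b = supp n F' c' a' b'"
      using ag(1) TP[OF b] by blast
  next
    fix c' a' b' assume a': "length (a'::bool list) = n" and b': "length (b'::bool list) = m"
    have Tinj: "inj_on T (vecs m)"
    proof (rule inj_onI)
      fix b1 b2 assume b12: "b1 \<in> vecs m" "b2 \<in> vecs m" "T b1 = T b2"
      show "b1 = b2"
      proof (rule vec_ext[of _ m])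
        show "length b1 = m" "length b2 = m" using b12 by auto
        fix z :: "bool list" assume z: "length z = m"
        then have "z \<in> A1 ` vecs m" using A1(2) unfolding bij_betw_def by simp
        then obtain y where y: "y \<in> vecs m" "z = A1 y" by (rule imageE) simp
        have "dotp b1 z = dotp b2 z" using TP b12 y by auto
        thus "dotp z b1 = dotp z b2" using dotp_sym z b12 by (metis vecs_iff)
      qed
    qed
    have "T ` vecs m = vecs m" by (rule endo_inj_surj[OF vecs_finite _ Tinj]) (use TP in auto)
    then have "b' \<in> T ` vecs m" using b' by simp
    then obtain b where b: "b \<in> vecs m" "b' = T b" by (rule imageE) simp
    hence bl: "length b = m" by simp
    let ?g = "\<lambda>x. c' \<noteq> (dotp a' (A2 x) \<noteq> dotp b (A3 x))"
    have "aff n ?g" using aff_xor[OF aff_const aff_xor[OF aff_dotp_affine[OF A2(1) a'] aff_dotp_affine[OF A3 bl]]] .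
    then obtain \<alpha> \<gamma> where ag: "length \<alpha> = n" "\<And>x. length x = n \<Longrightarrow> ?g x = (dotp \<alpha> x \<noteq> \<gamma>)"
      unfolding aff_def by blast
    have "A2 ` supp n F \<gamma> \<alpha> b = supp n F' c' a' b'"
    proof (rule supp_image[OF A2(2)])
      fix x :: "bool list" assume x: "length x = n"
      show "(\<gamma> \<noteq> (dotp \<alpha> x \<noteq> dotp b (F x))) = (c' \<noteq> (dotp a' (A2 x) \<noteq> dotp b' (F' (A2 x))))"
        using dec[OF bl x] ag(2)[OF x] b(2) by argo
    qed
    thus "\<exists>c a b. length a = n \<and> length b = m \<and> A2 ` supp n F c a b = supp n F' c' a' b'"
      using ag(1) bl by blast
  qed
qed

lemma supp_symdiff:
  assumes nm: "is_nm_function n m F" and l: "length a1 = n" "length a2 = n" "length b1 = m" "length b2 = m"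
  shows "{x\<in>vecs n. (x \<in> supp n F c1 a1 b1) \<noteq> (x \<in> supp n F c2 a2 b2)} = supp n F (c1 \<noteq> c2) (vadd a1 a2) (vadd b1 b2)"
proof -
  have "((c1 \<noteq> (dotp a1 x \<noteq> dotp b1 (F x))) \<noteq> (c2 \<noteq> (dotp a2 x \<noteq> dotp b2 (F x)))) =
        ((c1 \<noteq> c2) \<noteq> (dotp (vadd a1 a2) x \<noteq> dotp (vadd b1 b2) (F x)))" if x: "length x = n" for x
  proof -
    have "length (F x) = m" using nm x unfolding is_nm_function_def by auto
    hence "dotp (vadd a1 a2) x = (dotp a1 x \<noteq> dotp a2 x)" "dotp (vadd b1 b2) (F x) = (dotp b1 (F x) \<noteq> dotp b2 (F x))"
      using l x by (auto simp: dotp_add_left)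
    thus ?thesis by argo
  qed
  thus ?thesis unfolding supp_def by auto
qed

lemma image_symdiff:
  assumes bij: "bij_betw \<sigma> (vecs n) (vecs n)" and B: "B1 \<subseteq> vecs n" "B2 \<subseteq> vecs n"
  shows "\<sigma> ` {x\<in>vecs n. (x \<in> B1) \<noteq> (x \<in> B2)} = {y\<in>vecs n. (y \<in> \<sigma> ` B1) \<noteq> (y \<in> \<sigma> ` B2)}"
proof -
  have inj: "inj_on \<sigma> (vecs n)" and im: "\<sigma> ` vecs n = vecs n" using bij unfolding bij_betw_def by auto
  have mem: "x \<in> vecs n \<Longrightarrow> (\<sigma> x \<in> \<sigma> ` B) = (x \<in> B)" if "B \<subseteq> vecs n" for x B
    using inj that by (auto dest: inj_onD)
  show ?thesis
  proof
    show "\<sigma> ` {x\<in>vecs n. (x \<in> B1) \<noteq> (x \<in> B2)} \<subseteq> {y\<in>vecs n. (y \<in> \<sigma> ` B1) \<noteq> (y \<in> \<sigma> ` B2)}"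
    proof
      fix y assume "y \<in> \<sigma> ` {x\<in>vecs n. (x \<in> B1) \<noteq> (x \<in> B2)}"
      then obtain x where x: "x \<in> vecs n" "(x \<in> B1) \<noteq> (x \<in> B2)" "y = \<sigma> x" by blast
      have "\<sigma> x \<in> vecs n" using x(1) im by blast
      thus "y \<in> {y\<in>vecs n. (y \<in> \<sigma> ` B1) \<noteq> (y \<in> \<sigma> ` B2)}" using mem[OF B(1) x(1)] mem[OF B(2) x(1)] x(2,3) by simp
    qed
    show "{y\<in>vecs n. (y \<in> \<sigma> ` B1) \<noteq> (y \<in> \<sigma> ` B2)} \<subseteq> \<sigma> ` {x\<in>vecs n. (x \<in> B1) \<noteq> (x \<in> B2)}"
    proof
      fix y assume y: "y \<in> {y\<in>vecs n. (y \<in> \<sigma> ` B1) \<noteq> (y \<in> \<sigma> ` B2)}"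
      hence "y \<in> \<sigma> ` vecs n" using im by simp
      then obtain x where x: "x \<in> vecs n" "y = \<sigma> x" by (rule imageE) simp
      thus "y \<in> \<sigma> ` {x\<in>vecs n. (x \<in> B1) \<noteq> (x \<in> B2)}" using y mem[OF B(1) x(1)] mem[OF B(2) x(1)] by auto
    qed
  qed
qed

lemma image_compl:
  assumes bij: "bij_betw \<sigma> (vecs n) (vecs n)" and D: "D \<subseteq> vecs n"
  shows "\<sigma> ` (vecs n - D) = vecs n - \<sigma> ` D"
proof -
  have inj: "inj_on \<sigma> (vecs n)" and im: "\<sigma> ` vecs n = vecs n" using bij unfolding bij_betw_def by auto
  have "\<sigma> ` (vecs n - D) = \<sigma> ` vecs n - \<sigma> ` D" by (rule inj_on_image_set_diff[OF inj]) (use D in auto)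
  thus ?thesis using im by simp
qed

lemma supp_zero_ab: "a = vzero n \<Longrightarrow> card (supp n F c a (vzero m)) = 0 \<or> card (supp n F c a (vzero m)) = 2 ^ n"
proof -
  assume a: "a = vzero n"
  hence "supp n F c a (vzero m) = (if c then vecs n else {})" unfolding supp_zero_b a by auto
  thus ?thesis by (simp add: vecs_card)
qed

lemma hyp_step:
  assumes n: "n = 2 * Suc j" and m1: "m \<ge> 1" and bF: "vbent n m F" and bF': "vbent n m F'"
    and bij: "bij_betw \<sigma> (vecs n) (vecs n)"
    and img: "\<And>B. B \<in> add_design_blocks n m F \<Longrightarrow> \<sigma> ` B \<in> add_design_blocks n m F'"
    and H: "H \<in> Hyp n"
  shows "\<sigma> ` H \<in> Hyp n"
proof -
  obtain d e where de: "length d = n" "d \<noteq> vzero n" "H = {x\<in>vecs n. dotp d x = e}"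
    using H unfolding Hyp_def by blast
  have nmF: "is_nm_function n m F" and nmF': "is_nm_function n m F'" using bF bF' unfolding vbent_def by auto
  define b0 where "b0 = True # vzero (m - 1)"
  have b0: "length b0 = m" "b0 \<noteq> vzero m" unfolding b0_def using m1 by (auto simp: vzero_def) (cases m, auto)
  have z: "length (vzero n) = n" by simp
  obtain c1 where B1: "supp n F c1 (vzero n) b0 \<in> add_design_blocks n m F" using block_exists[OF bF n z b0] by blast
  obtain c2 where B2: "supp n F c2 d b0 \<in> add_design_blocks n m F" using block_exists[OF bF n de(1) b0] by blast
  obtain c1' a1' b1' where B1': "\<sigma> ` supp n F c1 (vzero n) b0 = supp n F' c1' a1' b1'" "length a1' = n" "length b1' = m"
    using block_form[OF n img[OF B1]] by blast
  obtain c2' a2' b2' where B2': "\<sigma> ` supp n F c2 d b0 = supp n F' c2' a2' b2'" "length a2' = n" "length b2' = m"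
    using block_form[OF n img[OF B2]] by blast
  define D where "D = {x\<in>vecs n. (x \<in> supp n F c1 (vzero n) b0) \<noteq> (x \<in> supp n F c2 d b0)}"
  have Dsub: "D \<subseteq> vecs n" unfolding D_def by auto
  have D1: "D = supp n F (c1 \<noteq> c2) (vadd (vzero n) d) (vadd b0 b0)"
    unfolding D_def by (rule supp_symdiff[OF nmF]) (use de b0 in auto)
  have D2: "D = {x\<in>vecs n. dotp d x = (c1 = c2)}"
    unfolding D1 using de b0 supp_zero_b[of n F "c1 \<noteq> c2" d m] by simp
  have cD: "card D = 2 ^ (n - 1)" unfolding D2 using hyp_card[OF de(1,2)] by simp
  have sD: "\<sigma> ` D = supp n F' (c1' \<noteq> c2') (vadd a1' a2') (vadd b1' b2')"
    unfolding D_def image_symdiff[OF bij supp_sub supp_sub] B1' B2'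
    by (rule supp_symdiff[OF nmF']) (use B1' B2' in auto)
  have cD': "card (\<sigma> ` D) = 2 ^ (n - 1)"
    using cD card_image[OF inj_on_subset[OF _ Dsub]] bij unfolding bij_betw_def by auto
  have bz: "vadd b1' b2' = vzero m"
  proof (rule ccontr)
    assume "vadd b1' b2' \<noteq> vzero m"
    hence "card (\<sigma> ` D) = 2^(n-1) - 2^(n div 2 - 1) \<or> card (\<sigma> ` D) = 2^(n-1) + 2^(n div 2 - 1)"
      unfolding sD using bent_weight(1)[OF bF' n, of "vadd a1' a2'" "vadd b1' b2'"] B1' B2' by auto
    thus False using cD' K_facts[OF n] by auto
  qed
  have az: "vadd a1' a2' \<noteq> vzero n"
  proof
    assume "vadd a1' a2' = vzero n"
    hence "card (\<sigma> ` D) = 0 \<or> card (\<sigma> ` D) = 2 ^ n" unfolding sD bz by (rule supp_zero_ab)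
    thus False using cD' K_facts[OF n] by auto
  qed
  have sD2: "\<sigma> ` D = {y\<in>vecs n. dotp (vadd a1' a2') y = (\<not> (c1' \<noteq> c2'))}"
    unfolding sD bz supp_zero_b ..
  have la: "length (vadd a1' a2') = n" using B1' B2' by simp
  show ?thesis
  proof (cases "e = (c1 = c2)")
    case True
    hence "H = D" unfolding de(3) D2 by simp
    thus ?thesis unfolding Hyp_def using sD2 la az by blast
  next
    case False
    hence "H = vecs n - D" unfolding de(3) D2 by auto
    hence "\<sigma> ` H = vecs n - \<sigma> ` D" using image_compl[OF bij Dsub] by simp
    also have "\<dots> = {y\<in>vecs n. dotp (vadd a1' a2') y = (c1' \<noteq> c2')}" unfolding sD2 by auto
    finally show ?thesis unfolding Hyp_def using la az by blast
  qed
qed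

lemma backward:
  assumes n: "n = 2 * Suc j" and m1: "m \<ge> 1" and bF: "vbent n m F" and bF': "vbent n m F'"
    and iso: "incidence_iso (vecs n) (add_design_blocks n m F) (vecs n) (add_design_blocks n m F')"
  shows "EA_equivalent n m F F'"
proof -
  obtain \<sigma> where bij: "bij_betw \<sigma> (vecs n) (vecs n)"
    and bijB: "bij_betw (\<lambda>X. \<sigma> ` X) (add_design_blocks n m F) (add_design_blocks n m F')"
    using iso unfolding incidence_iso_def by blast
  have img: "\<sigma> ` B \<in> add_design_blocks n m F'" if "B \<in> add_design_blocks n m F" for B
    using bij_betwE[OF bijB] that by blast
  have hyp: "\<sigma> ` H \<in> Hyp n" if "H \<in> Hyp n" for H by (rule hyp_step[OF n m1 bF bF' bij img that])
  have sa: "aaff n \<sigma>" by (rule geom[OF bij hyp])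
  define \<sigma>i where "\<sigma>i = inv_into (vecs n) \<sigma>"
  have sia: "aaff n \<sigma>i" unfolding \<sigma>i_def by (rule geom_inv[OF bij hyp])
  have inj: "inj_on \<sigma> (vecs n)" and im: "\<sigma> ` vecs n = vecs n" using bij unfolding bij_betw_def by auto
  have ssi: "length y = n \<Longrightarrow> \<sigma> (\<sigma>i y) = y" for y
    unfolding \<sigma>i_def using f_inv_into_f[of y \<sigma> "vecs n"] im by auto
  have sil: "length y = n \<Longrightarrow> length (\<sigma>i y) = n" for y using sia unfolding aaff_def by auto
  have sl: "length x = n \<Longrightarrow> length (\<sigma> x) = n" for x using sa unfolding aaff_def by auto
  have nmF: "is_nm_function n m F" and nmF': "is_nm_function n m F'" using bF bF' unfolding vbent_def by auto
  have Fl: "length x = n \<Longrightarrow> length (F x) = m" for x using nmF unfolding is_nm_function_def by auto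
  have F'l: "length x = n \<Longrightarrow> length (F' x) = m" for x using nmF' unfolding is_nm_function_def by auto
  define R where "R b \<beta> \<longleftrightarrow> length \<beta> = m \<and> (\<exists>g. aff n g \<and> (\<forall>x. length x = n \<longrightarrow> dotp b (F x) = (dotp \<beta> (F' (\<sigma> x)) \<noteq> g x)))" for b \<beta>
  have exR: "\<exists>\<beta>. R b \<beta>" if b: "length b = m" for b
  proof (cases "b = vzero m")
    case True
    have "R b (vzero m)" unfolding R_def True by (intro conjI exI[of _ "\<lambda>x. False"] aff_const) auto
    thus ?thesis by blast
  next
    case False
    have z: "length (vzero n) = n" by simp
    obtain c where B: "supp n F c (vzero n) b \<in> add_design_blocks n m F" using block_exists[OF bF n z b False] by blast
    obtain c' a' b' where B': "\<sigma> ` supp n F c (vzero n) b = supp n F' c' a' b'" "length a' = n" "length b' = m"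
      using block_form[OF n img[OF B]] by blast
    let ?g = "\<lambda>x. c \<noteq> (c' \<noteq> dotp a' (\<sigma> x))"
    have ga: "aff n ?g"
      using aff_comp[OF aff_xor[OF aff_const aff_xor[OF aff_const aff_dotp[OF B'(2)]]] sa] by simp
    have "dotp b (F x) = (dotp b' (F' (\<sigma> x)) \<noteq> ?g x)" if x: "length x = n" for x
    proof -
      have "(\<sigma> x \<in> \<sigma> ` supp n F c (vzero n) b) = (x \<in> supp n F c (vzero n) b)"
        using inj x supp_sub[of n F c "vzero n" b] by (auto dest: inj_onD)
      hence "(\<sigma> x \<in> supp n F' c' a' b') = (x \<in> supp n F c (vzero n) b)" using B'(1) by simp
      hence "(c' \<noteq> (dotp a' (\<sigma> x) \<noteq> dotp b' (F' (\<sigma> x)))) = (c \<noteq> (False \<noteq> dotp b (F x)))"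
        unfolding supp_def using x sl by simp
      thus ?thesis by argo
    qed
    hence "R b b'" unfolding R_def using B'(3) ga by blast
    thus ?thesis by blast
  qed
  have uniqR: "\<beta>1 = \<beta>2" if r: "R b \<beta>1" "R b \<beta>2" for b \<beta>1 \<beta>2
  proof -
    obtain g1 where g1: "aff n g1" "\<And>x. length x = n \<Longrightarrow> dotp b (F x) = (dotp \<beta>1 (F' (\<sigma> x)) \<noteq> g1 x)"
      using r(1) unfolding R_def by blast
    obtain g2 where g2: "aff n g2" "\<And>x. length x = n \<Longrightarrow> dotp b (F x) = (dotp \<beta>2 (F' (\<sigma> x)) \<noteq> g2 x)"
      using r(2) unfolding R_def by blast
    have l: "length \<beta>1 = m" "length \<beta>2 = m" using r unfolding R_def by auto
    have "aff n (\<lambda>y. g1 (\<sigma>i y) \<noteq> g2 (\<sigma>i y))" using aff_comp[OF aff_xor[OF g1(1) g2(1)] sia] by simp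
    moreover have "(g1 (\<sigma>i y) \<noteq> g2 (\<sigma>i y)) = dotp (vadd \<beta>1 \<beta>2) (F' y)" if y: "length y = n" for y
    proof -
      have "dotp (vadd \<beta>1 \<beta>2) (F' y) = (dotp \<beta>1 (F' y) \<noteq> dotp \<beta>2 (F' y))"
        using l F'l y by (simp add: dotp_add_left)
      moreover have "dotp b (F (\<sigma>i y)) = (dotp \<beta>1 (F' y) \<noteq> g1 (\<sigma>i y))" using g1(2)[OF sil[OF y]] ssi[OF y] by simp
      moreover have "dotp b (F (\<sigma>i y)) = (dotp \<beta>2 (F' y) \<noteq> g2 (\<sigma>i y))" using g2(2)[OF sil[OF y]] ssi[OF y] by simp
      ultimately show ?thesis by argo
    qed
    ultimately have "aff n (\<lambda>y. dotp (vadd \<beta>1 \<beta>2) (F' y))" by (rule aff_cong)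
    hence "vadd \<beta>1 \<beta>2 = vzero m"
      using bent_not_aff[OF bF' n, of "vadd \<beta>1 \<beta>2"] l by auto
    thus ?thesis using vadd_eq_zero[of \<beta>1 \<beta>2] l by simp
  qed
  have addR: "R (vadd b1 b2) (vadd \<beta>1 \<beta>2)" if r: "R b1 \<beta>1" "R b2 \<beta>2" and bl: "length b1 = m" "length b2 = m" for b1 b2 \<beta>1 \<beta>2
  proof -
    obtain g1 where g1: "aff n g1" "\<And>x. length x = n \<Longrightarrow> dotp b1 (F x) = (dotp \<beta>1 (F' (\<sigma> x)) \<noteq> g1 x)"
      using r(1) unfolding R_def by blast
    obtain g2 where g2: "aff n g2" "\<And>x. length x = n \<Longrightarrow> dotp b2 (F x) = (dotp \<beta>2 (F' (\<sigma> x)) \<noteq> g2 x)"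
      using r(2) unfolding R_def by blast
    have l: "length \<beta>1 = m" "length \<beta>2 = m" using r unfolding R_def by auto
    have "dotp (vadd b1 b2) (F x) = (dotp (vadd \<beta>1 \<beta>2) (F' (\<sigma> x)) \<noteq> (g1 x \<noteq> g2 x))" if x: "length x = n" for x
    proof -
      have "dotp (vadd b1 b2) (F x) = (dotp b1 (F x) \<noteq> dotp b2 (F x))" using bl Fl x by (simp add: dotp_add_left)
      moreover have "dotp (vadd \<beta>1 \<beta>2) (F' (\<sigma> x)) = (dotp \<beta>1 (F' (\<sigma> x)) \<noteq> dotp \<beta>2 (F' (\<sigma> x)))"
        using l F'l sl x by (simp add: dotp_add_left)
      ultimately show ?thesis using g1(2)[OF x] g2(2)[OF x] by argo
    qed
    thus ?thesis unfolding R_def using l aff_xor[OF g1(1) g2(1)] by auto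
  qed
  define \<phi> where "\<phi> b = (SOME \<beta>. R b \<beta>)" for b
  have phiR: "length b = m \<Longrightarrow> R b (\<phi> b)" for b unfolding \<phi>_def using exR someI_ex by metis
  have phil: "length b = m \<Longrightarrow> length (\<phi> b) = m" for b using phiR unfolding R_def by auto
  have phiadd: "\<phi> (vadd b1 b2) = vadd (\<phi> b1) (\<phi> b2)" if "length b1 = m" "length b2 = m" for b1 b2
    using uniqR[OF phiR addR[OF phiR phiR]] that by simp
  have phinz: "\<phi> b \<noteq> vzero m" if b: "length b = m" "b \<noteq> vzero m" for b
  proof
    assume z: "\<phi> b = vzero m"
    obtain g where g: "aff n g" "\<And>x. length x = n \<Longrightarrow> dotp b (F x) = (dotp (\<phi> b) (F' (\<sigma> x)) \<noteq> g x)"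
      using phiR[OF b(1)] unfolding R_def by blast
    have "aff n (\<lambda>x. dotp b (F x))" using g(1) by (rule aff_cong) (use g(2) z in simp)
    thus False using bent_not_aff[OF bF n b] by simp
  qed
  have phiinj: "inj_on \<phi> (vecs m)"
  proof (rule inj_onI)
    fix b1 b2 assume b: "b1 \<in> vecs m" "b2 \<in> vecs m" "\<phi> b1 = \<phi> b2"
    have "\<phi> (vadd b1 b2) = vzero m" using phiadd[of b1 b2] b phil by simp
    hence "vadd b1 b2 = vzero m" using phinz[of "vadd b1 b2"] b by auto
    thus "b1 = b2" using vadd_eq_zero[of b1 b2] b by simp
  qed
  have phisurj: "\<phi> ` vecs m = vecs m" by (rule endo_inj_surj[OF vecs_finite _ phiinj]) (use phil in auto)
  define A1 where "A1 y = (SOME \<alpha>. length \<alpha> = m \<and> (\<forall>b. length b = m \<longrightarrow> dotp (\<phi> b) y = dotp b \<alpha>))" for y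
  have A1P: "length (A1 y) = m \<and> (\<forall>b. length b = m \<longrightarrow> dotp (\<phi> b) y = dotp b (A1 y))" if y: "length y = m" for y
  proof -
    have "\<exists>\<alpha>. length \<alpha> = m \<and> (\<forall>b. length b = m \<longrightarrow> dotp (\<phi> b) y = dotp \<alpha> b)"
    proof (rule rep_lemma)
      fix b1 b2 :: "bool list" assume "length b1 = m" "length b2 = m"
      thus "dotp (\<phi> (vadd b1 b2)) y = (dotp (\<phi> b1) y \<noteq> dotp (\<phi> b2) y)"
        using phiadd phil y by (simp add: dotp_add_left)
    qed
    hence "\<exists>\<alpha>. length \<alpha> = m \<and> (\<forall>b. length b = m \<longrightarrow> dotp (\<phi> b) y = dotp b \<alpha>)"
      using dotp_sym by (metis)
    thus ?thesis unfolding A1_def by (rule someI_ex)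
  qed
  have A1lin: "linear_map m m A1" unfolding linear_map_def
  proof (intro conjI ballI)
    fix y assume "y \<in> vecs m" thus "A1 y \<in> vecs m" using A1P by simp
  next
    fix y1 y2 assume y: "y1 \<in> vecs m" "y2 \<in> vecs m"
    show "A1 (vadd y1 y2) = vadd (A1 y1) (A1 y2)"
    proof (rule vec_ext[of _ m])
      show "length (A1 (vadd y1 y2)) = m" "length (vadd (A1 y1) (A1 y2)) = m" using A1P y by auto
      fix b :: "bool list" assume b: "length b = m"
      have "dotp b (A1 (vadd y1 y2)) = dotp (\<phi> b) (vadd y1 y2)" using A1P[of "vadd y1 y2"] y b by simp
      also have "\<dots> = (dotp (\<phi> b) y1 \<noteq> dotp (\<phi> b) y2)" using y b phil by (simp add: dotp_add_right)
      also have "\<dots> = (dotp b (A1 y1) \<noteq> dotp b (A1 y2))" using A1P y b by simp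
      also have "\<dots> = dotp b (vadd (A1 y1) (A1 y2))" using A1P y b by (simp add: dotp_add_right)
      finally show "dotp b (A1 (vadd y1 y2)) = dotp b (vadd (A1 y1) (A1 y2))" .
    qed
  qed
  have A1inj: "inj_on A1 (vecs m)"
  proof (rule inj_onI)
    fix y1 y2 assume y: "y1 \<in> vecs m" "y2 \<in> vecs m" "A1 y1 = A1 y2"
    show "y1 = y2"
    proof (rule vec_ext[of _ m])
      show "length y1 = m" "length y2 = m" using y by auto
      fix \<beta> :: "bool list" assume be: "length \<beta> = m"
      hence "\<beta> \<in> \<phi> ` vecs m" using phisurj by simp
      then obtain b where b: "b \<in> vecs m" "\<beta> = \<phi> b" by (rule imageE) simp
      show "dotp \<beta> y1 = dotp \<beta> y2" using A1P y b by auto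
    qed
  qed
  have "A1 ` vecs m \<subseteq> vecs m" using A1P by auto
  hence "A1 ` vecs m = vecs m" using endo_inj_surj[OF vecs_finite _ A1inj] by blast
  hence A1bij: "bij_betw A1 (vecs m) (vecs m)" unfolding bij_betw_def using A1inj by blast
  define A3 where "A3 x = vadd (F x) (A1 (F' (\<sigma> x)))" for x
  have A3l: "length x = n \<Longrightarrow> length (A3 x) = m" for x unfolding A3_def using Fl F'l sl A1P by simp
  have A3aff: "affine_map n m A3"
  proof (rule affine_from_components[OF A3l])
    fix b :: "bool list" assume b: "length b = m"
    obtain g where g: "aff n g" "\<And>x. length x = n \<Longrightarrow> dotp b (F x) = (dotp (\<phi> b) (F' (\<sigma> x)) \<noteq> g x)"
      using phiR[OF b] unfolding R_def by blast
    show "aff n (\<lambda>x. dotp b (A3 x))" using g(1)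
    proof (rule aff_cong)
      fix x :: "bool list" assume x: "length x = n"
      have "dotp b (A3 x) = (dotp b (F x) \<noteq> dotp b (A1 (F' (\<sigma> x))))"
        unfolding A3_def using b Fl F'l sl A1P x by (simp add: dotp_add_right)
      also have "dotp b (A1 (F' (\<sigma> x))) = dotp (\<phi> b) (F' (\<sigma> x))" using A1P F'l sl x b by simp
      finally show "g x = dotp b (A3 x)" using g(2)[OF x] by argo
    qed
  qed
  have FE: "\<forall>x\<in>vecs n. F x = vadd (A1 (F' (\<sigma> x))) (A3 x)"
  proof
    fix x assume x: "x \<in> vecs n"
    have l: "length (F x) = m" "length (A1 (F' (\<sigma> x))) = m" using Fl F'l sl A1P x by auto
    show "F x = vadd (A1 (F' (\<sigma> x))) (A3 x)" unfolding A3_def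
      by (rule nth_equalityI) (use l in auto)
  qed
  show ?thesis unfolding EA_equivalent_def
    using A1lin A1bij affine_of_aaff[OF sa] bij A3aff FE by blast
qed

theorem theorem1:
  fixes n m :: nat and F F' :: "bool list \<Rightarrow> bool list"
  assumes "even n" and "1 \<le> m" and "m \<le> n div 2"
    and "vbent n m F" and "vbent n m F'"
  shows "EA_equivalent n m F F' \<longleftrightarrow>
    incidence_iso (vecs n) (add_design_blocks n m F) (vecs n) (add_design_blocks n m F')"
proof -
  obtain k where k: "n = 2 * k" using assms(1) by blast
  have "k \<ge> 1" using assms(2,3) k by simp
  then obtain j where "k = Suc j" by (cases k) auto
  hence n: "n = 2 * Suc j" using k by simp
  show ?thesis
  proof
    assume "EA_equivalent n m F F'"
    thus "incidence_iso (vecs n) (add_design_blocks n m F) (vecs n) (add_design_blocks n m F')"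
      using forward assms(5) unfolding vbent_def by blast
  next
    assume "incidence_iso (vecs n) (add_design_blocks n m F) (vecs n) (add_design_blocks n m F')"
    thus "EA_equivalent n m F F'" using backward[OF n assms(2,4,5)] by blast
  qed
qed

end
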